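(* Let $G(x)=\dfrac{1}{4\sqrt{2e^{-x}-1}}$ for real $x<\ln2$. Then: (1) $G$ is logarithmically absolutely monotonic on $(-\infty,\ln 2)$. (2) The sequences \[ (-1)^n\sum_{k=0}^{n}(-1)^kS(n,k)(2k-1)!!,\quad n\in\{0,1,2,\dots\}, \] and \[ (-1)^n\sum_{k=1}^{n}(-1)^kS(n,k)(2k-2)!!,\quad n\in\{1,2,\dots\}, \] are positive, increasing, and logarithmically convex.
   Context: A positive infinitely differentiable function $f$ on an interval $I$ is logarithmically absolutely monotonic if $[\ln f(x)]^{(n)}\ge0$ for all $n\in\mathbb{N}$ and $x\in I$. $S(n,k)$ are the Stirling numbers of the second kind, given by $\frac{(e^x-1)^k}{k!}=\sum_{n\ge k}S(n,k)\frac{x^n}{n!}$. Double factorials: $(2k-1)!!=1\cdot3\cdots(2k-1)$ for $k\ge1$, $(-1)!!=1$, and $(2j)!!=2^jj!$ with $0!!=1$. A sequence $(s_n)$ of positive numbers is logarithmically convex if $s_n^2\le s_{n-1}s_{n+1}$ for all $n$ at which both neighbours are defined. *)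

theory Defs
  imports "HOL-Analysis.Analysis" "HOL-Combinatorics.Stirling"
begin

definition log_abs_monotonic_on :: "(real \<Rightarrow> real) \<Rightarrow> real set \<Rightarrow> bool" where
  "log_abs_monotonic_on f I \<longleftrightarrow>
     (\<forall>x\<in>I. f x > 0) \<and>
     (\<forall>n. \<forall>x\<in>I. ((deriv ^^ n) f) differentiable (at x)) \<and>
     (\<forall>n\<ge>1. \<forall>x\<in>I. (deriv ^^ n) (\<lambda>y. ln (f y)) x \<ge> 0)"

text \<open>Odd double factorial: odd_dfact k = (2k-1)!!, with (-1)!! = 1.\<close>
definition odd_dfact :: "nat \<Rightarrow> nat" where
  "odd_dfact k = (\<Prod>i\<in>{1..k}. 2 * i - 1)"

text \<open>Even double factorial: even_dfact j = (2j)!! = 2^j j!, with 0!! = 1.\<close>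
definition even_dfact :: "nat \<Rightarrow> nat" where
  "even_dfact j = 2 ^ j * fact j"

definition G :: "real \<Rightarrow> real" where
  "G x = 1 / (4 * sqrt (2 * exp (- x) - 1))"

definition seqA :: "nat \<Rightarrow> real" where
  "seqA n = (-1) ^ n * (\<Sum>k=0..n. (-1) ^ k * real (Stirling n k) * real (odd_dfact k))"

definition seqB :: "nat \<Rightarrow> real" where
  "seqB n = (-1) ^ n * (\<Sum>k=1..n. (-1) ^ k * real (Stirling n k) * real (even_dfact (k - 1)))"

end

theory Submission
  imports Defs "HOL-Real_Asymp.Real_Asymp"
begin

definition Tsum :: "(nat \<Rightarrow> real) \<Rightarrow> nat \<Rightarrow> real" where
  "Tsum c n = (-1) ^ n * (\<Sum>k\<le>n. (-1) ^ k * real (Stirling n k) * c k)"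

definition Dop :: "(nat \<Rightarrow> real) \<Rightarrow> nat \<Rightarrow> real" where
  "Dop c k = c (Suc k) - real k * c k"

lemma Tsum_Suc: "Tsum c (Suc n) = Tsum (Dop c) n"
proof -
  define g where "g j = (-1::real) ^ j * real j * real (Stirling n j) * c j" for j
  have g0: "g 0 = 0" by (simp add: g_def)
  have gS: "g (Suc n) = 0" by (simp add: g_def)
  have shift: "(\<Sum>i\<le>n. g (Suc i)) = (\<Sum>j\<le>n. g j)"
  proof -
    have "(\<Sum>j\<le>Suc n. g j) = g 0 + (\<Sum>i\<le>n. g (Suc i))" by (rule sum.atMost_Suc_shift)
    moreover have "(\<Sum>j\<le>Suc n. g j) = (\<Sum>j\<le>n. g j) + g (Suc n)" by simp
    ultimately show ?thesis using g0 gS by simp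
  qed
  have "(\<Sum>k\<le>Suc n. (-1) ^ k * real (Stirling (Suc n) k) * c k)
      = (\<Sum>i\<le>n. (-1) ^ Suc i * real (Stirling (Suc n) (Suc i)) * c (Suc i))"
    by (subst sum.atMost_Suc_shift) simp
  also have "\<dots> = (\<Sum>i\<le>n. g (Suc i) - (-1) ^ i * real (Stirling n i) * c (Suc i))"
    by (rule sum.cong) (simp_all add: g_def algebra_simps)
  also have "\<dots> = (\<Sum>i\<le>n. g (Suc i)) - (\<Sum>i\<le>n. (-1) ^ i * real (Stirling n i) * c (Suc i))"
    by (simp add: sum_subtractf)
  also have "\<dots> = (\<Sum>k\<le>n. g k - (-1) ^ k * real (Stirling n k) * c (Suc k))"
    unfolding shift by (simp add: sum_subtractf)
  also have "\<dots> = (\<Sum>k\<le>n. - ((-1) ^ k * real (Stirling n k) * Dop c k))"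
    by (rule sum.cong) (simp_all add: g_def Dop_def algebra_simps)
  also have "\<dots> = - (\<Sum>k\<le>n. (-1) ^ k * real (Stirling n k) * Dop c k)"
    by (simp add: sum_negf)
  finally show ?thesis by (simp add: Tsum_def)
qed

lemma Tsum_iter: "Tsum c n = (Dop ^^ n) c 0"
proof (induction n arbitrary: c)
  case 0 then show ?case by (simp add: Tsum_def)
next
  case (Suc n) then show ?case by (simp add: Tsum_Suc funpow_Suc_right del: funpow.simps)
qed

lemma Dop_iter_moment:
  assumes summ: "\<And>n k. summable (\<lambda>m. w m * lam m ^ n * pochhammer (lam m) k)"
    and c: "\<And>k. c k = (\<Sum>m. w m * pochhammer (lam m) k)"
  shows "(Dop ^^ n) c k = (\<Sum>m. w m * lam m ^ n * pochhammer (lam m) k)"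
proof (induction n arbitrary: k)
  case 0 then show ?case using c by simp
next
  case (Suc n)
  have "(Dop ^^ Suc n) c k = (\<Sum>m. w m * lam m ^ n * pochhammer (lam m) (Suc k))
      - real k * (\<Sum>m. w m * lam m ^ n * pochhammer (lam m) k)"
    by (simp add: Dop_def Suc.IH)
  also have "\<dots> = (\<Sum>m. w m * lam m ^ n * pochhammer (lam m) (Suc k)
      - real k * (w m * lam m ^ n * pochhammer (lam m) k))"
    by (simp add: suminf_mult[symmetric] summ suminf_diff summable_mult)
  also have "\<dots> = (\<Sum>m. w m * lam m ^ Suc n * pochhammer (lam m) k)"
    by (rule suminf_cong) (simp add: pochhammer_rec' algebra_simps)
  finally show ?case .
qed

lemma Tsum_moment:
  assumes "\<And>n k. summable (\<lambda>m. w m * lam m ^ n * pochhammer (lam m) k)"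
    and "\<And>k. c k = (\<Sum>m. w m * pochhammer (lam m) k)"
  shows "Tsum c n = (\<Sum>m. w m * lam m ^ n)"
  using Dop_iter_moment[OF assms, of n 0] by (simp add: Tsum_iter)

lemma moment_logconvex:
  fixes w lam :: "nat \<Rightarrow> real"
  assumes w: "\<And>m. w m \<ge> 0" and l: "\<And>m. lam m \<ge> 0"
    and s: "\<And>n. summable (\<lambda>m. w m * lam m ^ n)"
  shows "(\<Sum>m. w m * lam m ^ Suc n)\<^sup>2 \<le> (\<Sum>m. w m * lam m ^ n) * (\<Sum>m. w m * lam m ^ Suc (Suc n))"
proof -
  have fin: "(\<Sum>m<N. w m * lam m ^ Suc n)\<^sup>2 \<le> (\<Sum>m<N. w m * lam m ^ n) * (\<Sum>m<N. w m * lam m ^ Suc (Suc n))" for N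
  proof -
    have CS: "(\<Sum>m<N. sqrt (w m * lam m ^ n) * sqrt (w m * lam m ^ Suc (Suc n)))\<^sup>2
       \<le> (\<Sum>m<N. (sqrt (w m * lam m ^ n))\<^sup>2) * (\<Sum>m<N. (sqrt (w m * lam m ^ Suc (Suc n)))\<^sup>2)"
      by (rule Cauchy_Schwarz_ineq_sum)
    have e1: "sqrt (w m * lam m ^ n) * sqrt (w m * lam m ^ Suc (Suc n)) = w m * lam m ^ Suc n" for m
    proof -
      have "sqrt (w m * lam m ^ n) * sqrt (w m * lam m ^ Suc (Suc n)) = sqrt ((w m * lam m ^ Suc n)\<^sup>2)"
        by (simp add: real_sqrt_mult[symmetric] power2_eq_square algebra_simps)
      also have "\<dots> = w m * lam m ^ Suc n" using w l by simp
      finally show ?thesis .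
    qed
    have e2: "(sqrt (w m * lam m ^ j))\<^sup>2 = w m * lam m ^ j" for m j using w l by simp
    show ?thesis using CS by (simp only: e1 e2)
  qed
  have "(\<lambda>N. (\<Sum>m<N. w m * lam m ^ Suc n)\<^sup>2) \<longlonglongrightarrow> (\<Sum>m. w m * lam m ^ Suc n)\<^sup>2"
    by (intro tendsto_intros summable_LIMSEQ s)
  moreover have "(\<lambda>N. (\<Sum>m<N. w m * lam m ^ n) * (\<Sum>m<N. w m * lam m ^ Suc (Suc n)))
     \<longlonglongrightarrow> (\<Sum>m. w m * lam m ^ n) * (\<Sum>m. w m * lam m ^ Suc (Suc n))"
    by (intro tendsto_intros summable_LIMSEQ s)
  ultimately show ?thesis by (rule LIMSEQ_le) (use fin in auto)
qed

lemma incr_from_logconvex: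
  fixes s :: "nat \<Rightarrow> real"
  assumes pos: "\<And>n. s n > 0" and s01: "s 0 \<le> s 1"
    and lc: "\<And>n. (s (Suc n))\<^sup>2 \<le> s n * s (Suc (Suc n))"
  shows "s n \<le> s (Suc n)"
proof (induction n)
  case 0 then show ?case using s01 by simp
next
  case (Suc n)
  have "s (Suc n) * s (Suc n) \<le> s n * s (Suc (Suc n))" using lc[of n] by (simp add: power2_eq_square)
  also have "\<dots> \<le> s (Suc n) * s (Suc (Suc n))"
    using Suc.IH pos[of "Suc (Suc n)"] by (intro mult_right_mono) auto
  finally show ?case using pos[of "Suc n"] by simp
qed

lemma summable_poly_geom: "summable (\<lambda>m. (real m + a) ^ j * (1/2::real) ^ m)"
proof -
  have "((\<lambda>m. (real m + a)^j * (1/2)^m / (3/4)^m) \<longlongrightarrow> 0) at_top"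
    by real_asymp
  then have "eventually (\<lambda>m. norm ((real m + a)^j * (1/2)^m / (3/4)^m) < 1) at_top"
    by (intro order_tendstoD(2)[of _ "0"] tendsto_norm_zero) auto
  then have "eventually (\<lambda>m. norm ((real m + a)^j * (1/2::real)^m) \<le> (3/4)^m) at_top"
    by eventually_elim (simp add: divide_simps abs_mult, metis less_eq_real_def mult.commute)
  then show ?thesis
    by (rule summable_comparison_test_ev) (simp add: summable_geometric)
qed

lemma summable_bound:
  fixes f :: "nat \<Rightarrow> real"
  assumes "\<And>m. 0 \<le> f m" "\<And>m. f m \<le> C * (real m + a) ^ j * (1/2) ^ m"
  shows "summable f"
proof (rule summable_comparison_test')
  show "summable (\<lambda>m. C * ((real m + a) ^ j * (1/2) ^ m))"
    by (intro summable_mult summable_poly_geom)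
  show "norm (f m) \<le> C * ((real m + a) ^ j * (1/2) ^ m)" for m
    using assms[of m] by (simp add: mult.assoc)
qed

lemma pochhammer_bound:
  fixes a :: real assumes "a \<ge> 0" shows "pochhammer a k \<le> (a + real k + 1) ^ k"
proof -
  have "pochhammer a k = (\<Prod>i\<in>{0..<k}. a + real i)" by (simp add: pochhammer_prod)
  also have "\<dots> \<le> (a + real k + 1) ^ k"
    by (rule prod_le_power) (use assms in auto)
  finally show ?thesis .
qed

lemma pochhammer_nonneg': "(a::real) \<ge> 0 \<Longrightarrow> pochhammer a k \<ge> 0"
  by (simp add: pochhammer_prod prod_nonneg)

lemma central_binom_rec:
  "Suc j * ((2 * Suc j) choose Suc j) = 2 * (2 * j + 1) * ((2 * j) choose j)"
proof -
  have a: "Suc (Suc (2*j)) * (Suc (2*j) choose j) = (Suc (Suc (2*j)) choose Suc j) * Suc j"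
    by (rule Suc_times_binomial_eq)
  have b: "Suc (2*j) * ((2*j) choose j) = (Suc (2*j) choose Suc j) * Suc j"
    by (rule Suc_times_binomial_eq)
  have c: "(Suc (2*j) choose Suc j) = (Suc (2*j) choose j)"
    using binomial_symmetric[of "Suc j" "Suc (2*j)"] by simp
  have "2 * Suc j = Suc (Suc (2*j))" by simp
  then have "Suc j * ((2 * Suc j) choose Suc j) = 2 * Suc j * (Suc (2*j) choose j)"
    using a by (simp del: binomial_Suc_Suc add: algebra_simps)
  also have "\<dots> = 2 * (Suc (2*j) * ((2*j) choose j))" using b c by (simp del: binomial_Suc_Suc add: algebra_simps)
  finally show ?thesis by simp
qed

definition vA :: "nat \<Rightarrow> real" where "vA m = real ((2 * m) choose m) / 8 ^ m"
definition lamA :: "nat \<Rightarrow> real" where "lamA m = real m + 1/2"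

lemma vA_nonneg: "vA m \<ge> 0" by (simp add: vA_def)

lemma vA_le: "vA m \<le> (1/2) ^ m"
proof -
  have "real ((2 * m) choose m) \<le> 2 ^ (2 * m)"
    using binomial_le_pow2[of "2*m" m] by (metis of_nat_le_iff of_nat_numeral of_nat_power)
  also have "(2::real) ^ (2 * m) = 4 ^ m" by (simp add: power_mult)
  finally have "real ((2 * m) choose m) \<le> 4 ^ m" .
  then have "vA m \<le> 4 ^ m / 8 ^ m" unfolding vA_def by (simp add: divide_right_mono)
  also have "(4::real) ^ m / 8 ^ m = (1/2) ^ m" by (simp add: power_divide[symmetric])
  finally show ?thesis .
qed

lemma vA_Suc: "real (Suc j) * vA (Suc j) = vA j * lamA j / 2"
proof -
  have "real (Suc j * ((2 * Suc j) choose Suc j)) = real (2 * (2 * j + 1) * ((2 * j) choose j))"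
    by (subst central_binom_rec) (simp del: binomial_Suc_Suc)
  then have "real (Suc j) * real ((2 * Suc j) choose Suc j) = 2 * (2 * real j + 1) * real ((2 * j) choose j)"
    by (simp only: of_nat_mult of_nat_Suc of_nat_add) (simp del: binomial_Suc_Suc)
  then show ?thesis unfolding vA_def lamA_def by (simp del: binomial_Suc_Suc add: field_simps)
qed

lemma summable_A: "summable (\<lambda>m. vA m * lamA m ^ n * pochhammer (lamA m) k)"
proof (rule summable_bound[where C=1 and a="real k + 2" and j="n + k"])
  fix m
  have l0: "lamA m \<ge> 0" by (simp add: lamA_def)
  show "0 \<le> vA m * lamA m ^ n * pochhammer (lamA m) k"
    using vA_nonneg l0 pochhammer_nonneg' by simp
  have p: "pochhammer (lamA m) k \<le> (real m + (real k + 2)) ^ k"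
    using pochhammer_bound[OF l0, of k] power_mono[of "lamA m + real k + 1" "real m + (real k + 2)" k] l0
    by (simp add: lamA_def)
  have q: "lamA m ^ n \<le> (real m + (real k + 2)) ^ n"
    using l0 by (intro power_mono) (auto simp: lamA_def)
  have "vA m * lamA m ^ n * pochhammer (lamA m) k \<le> (1/2)^m * (real m + (real k + 2)) ^ n * (real m + (real k + 2)) ^ k"
    using vA_le vA_nonneg l0 p q pochhammer_nonneg'
    by (intro mult_mono) auto
  then show "vA m * lamA m ^ n * pochhammer (lamA m) k \<le> 1 * (real m + (real k + 2)) ^ (n + k) * (1/2)^m"
    by (simp add: power_add algebra_simps)
qed

definition AA :: "nat \<Rightarrow> real" where "AA k = (\<Sum>m. vA m * pochhammer (lamA m) k)"

lemma AA_Suc: "AA (Suc k) = (2 * real k + 1) * AA k"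
proof -
  have s0: "summable (\<lambda>m. vA m * pochhammer (lamA m) j)" for j
    using summable_A[of 0 j] by simp
  have s1: "summable (\<lambda>m. real m * vA m * pochhammer (lamA m) k)"
  proof -
    have "summable (\<lambda>m. vA m * pochhammer (lamA m) k * (lamA m + real k) - (real k + 1/2) * (vA m * pochhammer (lamA m) k))"
      using s0[of "Suc k"] s0[of k] by (intro summable_diff summable_mult) (simp_all add: pochhammer_rec' algebra_simps)
    then show ?thesis by (simp add: lamA_def algebra_simps)
  qed
  have "AA (Suc k) = (\<Sum>m. real m * vA m * pochhammer (lamA m) k + (real k + 1/2) * (vA m * pochhammer (lamA m) k))"
    unfolding AA_def by (rule suminf_cong) (simp add: pochhammer_rec' lamA_def algebra_simps)
  also have "\<dots> = (\<Sum>m. real m * vA m * pochhammer (lamA m) k) + (real k + 1/2) * AA k"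
    unfolding AA_def using s1 s0[of k] by (simp add: suminf_add[symmetric] suminf_mult summable_mult)
  also have "(\<Sum>m. real m * vA m * pochhammer (lamA m) k) = (\<Sum>j. real (Suc j) * vA (Suc j) * pochhammer (lamA (Suc j)) k)"
    using suminf_split_head[OF s1] by simp
  also have "\<dots> = (\<Sum>j. vA j * pochhammer (lamA j) (Suc k) / 2)"
  proof (rule suminf_cong)
    fix j
    have "lamA (Suc j) = lamA j + 1" by (simp add: lamA_def)
    then show "real (Suc j) * vA (Suc j) * pochhammer (lamA (Suc j)) k = vA j * pochhammer (lamA j) (Suc k) / 2"
      by (simp only: vA_Suc pochhammer_rec) simp
  qed
  also have "\<dots> = AA (Suc k) / 2"
    unfolding AA_def using s0[of "Suc k"] by (simp add: suminf_divide)
  finally show ?thesis by (simp del: binomial_Suc_Suc add: algebra_simps)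
qed

lemma AA0_pos: "AA 0 > 0"
proof -
  have "summable (\<lambda>m. vA m)" using summable_A[of 0 0] by simp
  moreover have "0 < vA 0" by (simp add: vA_def)
  ultimately show ?thesis unfolding AA_def using vA_nonneg
    by (simp add: suminf_pos_iff) blast
qed

lemma odd_dfact_Suc: "odd_dfact (Suc k) = (2 * k + 1) * odd_dfact k"
  unfolding odd_dfact_def by (simp add: prod.nat_ivl_Suc' algebra_simps)

lemma odd_dfact_AA: "real (odd_dfact k) = AA k / AA 0"
  using AA0_pos by (induction k) (simp_all add: odd_dfact_Suc AA_Suc odd_dfact_def field_simps)

definition wA :: "nat \<Rightarrow> real" where "wA m = vA m / AA 0"

lemma seqA_moment: "seqA n = (\<Sum>m. wA m * lamA m ^ n)"
proof -
  have "seqA n = Tsum (\<lambda>k. real (odd_dfact k)) n"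
    unfolding seqA_def Tsum_def by (simp add: atLeast0AtMost)
  also have "\<dots> = (\<Sum>m. wA m * lamA m ^ n)"
  proof (rule Tsum_moment)
    show "summable (\<lambda>m. wA m * lamA m ^ n * pochhammer (lamA m) k)" for n k
      using summable_divide[OF summable_A[of n k], of "AA 0"] by (simp add: wA_def)
    show "real (odd_dfact k) = (\<Sum>m. wA m * pochhammer (lamA m) k)" for k
      unfolding odd_dfact_AA AA_def wA_def using summable_A[of 0 k]
      by (simp add: suminf_divide[symmetric])
  qed
  finally show ?thesis .
qed

definition uB :: "nat \<Rightarrow> real" where "uB m = (1/2) ^ Suc m"

lemma summable_B: "summable (\<lambda>m. uB m * real m ^ n * pochhammer (real m + real a) k)"
proof (rule summable_bound[where C=1 and a="real k + real a + 2" and j="n + k"])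
  fix m
  show "0 \<le> uB m * real m ^ n * pochhammer (real m + real a) k"
    using pochhammer_nonneg'[of "real m + real a" k] by (simp add: uB_def)
  have p: "pochhammer (real m + real a) k \<le> (real m + (real k + real a + 2)) ^ k"
    using pochhammer_bound[of "real m + real a" k]
      power_mono[of "real m + real a + real k + 1" "real m + (real k + real a + 2)" k]
    by simp
  have q: "real m ^ n \<le> (real m + (real k + real a + 2)) ^ n"
    by (intro power_mono) auto
  have u: "uB m \<le> (1/2) ^ m" by (simp add: uB_def)
  have "uB m * real m ^ n * pochhammer (real m + real a) k \<le> (1/2)^m * (real m + (real k + real a + 2)) ^ n * (real m + (real k + real a + 2)) ^ k"
    using p q u pochhammer_nonneg'[of "real m + real a" k]
    by (intro mult_mono) (auto simp: uB_def)
  then show "uB m * real m ^ n * pochhammer (real m + real a) k \<le> 1 * (real m + (real k + real a + 2)) ^ (n + k) * (1/2)^m"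
    by (simp add: power_add algebra_simps)
qed

definition BB :: "nat \<Rightarrow> real" where "BB k = (\<Sum>m. uB m * pochhammer (real m) k)"
definition EE :: "nat \<Rightarrow> real" where "EE k = (\<Sum>m. uB m * pochhammer (real m + 1) k)"

lemma sB0: "summable (\<lambda>m. uB m * pochhammer (real m) k)"
  using summable_B[of 0 0 k] by simp
lemma sB1: "summable (\<lambda>m. uB m * pochhammer (real m + 1) k)"
  using summable_B[of 0 1 k] by simp

lemma EE_BB: "EE k = 2 * BB k - (if k = 0 then 1 else 0)"
proof -
  have "(\<Sum>j. uB (Suc j) * pochhammer (real (Suc j)) k) = BB k - uB 0 * pochhammer (real 0) k"
    unfolding BB_def by (rule suminf_split_head[OF sB0])
  moreover have "(\<Sum>j. uB (Suc j) * pochhammer (real (Suc j)) k) = EE k / 2"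
    unfolding EE_def using sB1[of k]
    by (simp add: suminf_divide[symmetric] uB_def algebra_simps)
  moreover have "uB 0 * pochhammer (real 0) k = (if k = 0 then 1/2 else 0)"
    by (simp add: uB_def pochhammer_0_left)
  ultimately show ?thesis by (auto simp: algebra_simps)
qed

lemma BB_Suc_EE: "BB (Suc k) = EE (Suc k) - (real k + 1) * EE k"
proof -
  have "BB (Suc k) = (\<Sum>m. uB m * pochhammer (real m + 1) (Suc k) - (real k + 1) * (uB m * pochhammer (real m + 1) k))"
    unfolding BB_def
  proof (rule suminf_cong)
    fix m
    have "pochhammer (real m) (Suc k) = real m * pochhammer (real m + 1) k" by (rule pochhammer_rec)
    moreover have "pochhammer (real m + 1) (Suc k) = (real m + 1 + real k) * pochhammer (real m + 1) k"
      by (rule pochhammer_rec')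
    ultimately show "uB m * pochhammer (real m) (Suc k) = uB m * pochhammer (real m + 1) (Suc k) - (real k + 1) * (uB m * pochhammer (real m + 1) k)"
      by (simp add: algebra_simps)
  qed
  also have "\<dots> = EE (Suc k) - (real k + 1) * EE k"
    unfolding EE_def using sB1[of "Suc k"] sB1[of k]
    by (simp add: suminf_diff[symmetric] summable_mult suminf_mult[symmetric])
  finally show ?thesis .
qed

lemma BB0: "BB 0 = 1"
proof -
  have "BB 0 = (\<Sum>m. (1/2) * (1/2::real) ^ m)" unfolding BB_def uB_def by simp
  also have "\<dots> = (1/2) * (\<Sum>m. (1/2::real) ^ m)" by (rule suminf_mult) (simp add: summable_geometric)
  also have "\<dots> = 1" by (simp add: suminf_geometric)
  finally show ?thesis .
qed

lemma BB_Suc: "BB (Suc k) = (real k + 1) * (2 * BB k - (if k = 0 then 1 else 0))"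
  using BB_Suc_EE[of k] EE_BB[of k] EE_BB[of "Suc k"] by (simp add: algebra_simps)

lemma BB_Suc_closed: "BB (Suc k) = 2 ^ k * fact (Suc k)"
proof (induction k)
  case 0 then show ?case using BB_Suc[of 0] BB0 by simp
next
  case (Suc k) then show ?case using BB_Suc[of "Suc k"] by (simp add: algebra_simps)
qed

definition cB :: "nat \<Rightarrow> real" where
  "cB k = (if k = 0 then 0 else real (even_dfact (k - 1)))"

lemma Dop_cB: "Dop cB k = BB k"
proof (cases k)
  case 0 then show ?thesis by (simp add: Dop_def cB_def even_dfact_def BB0)
next
  case (Suc j)
  then show ?thesis by (simp add: Dop_def cB_def even_dfact_def BB_Suc_closed algebra_simps)
qed

definition tB :: "nat \<Rightarrow> real" where "tB n = (\<Sum>m. uB m * real m ^ n)"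

lemma seqB_moment: "seqB (Suc n) = tB n"
proof -
  have "seqB (Suc n) = Tsum cB (Suc n)"
  proof -
    have "(\<Sum>k\<le>Suc n. (-1) ^ k * real (Stirling (Suc n) k) * cB k)
        = (-1) ^ 0 * real (Stirling (Suc n) 0) * cB 0 + (\<Sum>k=1..Suc n. (-1) ^ k * real (Stirling (Suc n) k) * cB k)"
      by (simp add: atMost_atLeast0 sum.atLeast_Suc_atMost)
    also have "\<dots> = (\<Sum>k=1..Suc n. (-1) ^ k * real (Stirling (Suc n) k) * real (even_dfact (k - 1)))"
      by (simp add: cB_def)
    finally show ?thesis unfolding seqB_def Tsum_def by simp
  qed
  also have "\<dots> = Tsum (Dop cB) n" by (rule Tsum_Suc)
  also have "\<dots> = tB n"
    unfolding tB_def
  proof (rule Tsum_moment)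
    show "summable (\<lambda>m. uB m * real m ^ n * pochhammer (real m) k)" for n k
      using summable_B[of n 0 k] by simp
    show "Dop cB k = (\<Sum>m. uB m * pochhammer (real m) k)" for k
      by (simp add: Dop_cB BB_def)
  qed
  finally show ?thesis .
qed

lemma seqA_facts:
  "(\<forall>n. seqA n > 0) \<and> (\<forall>n. seqA n \<le> seqA (Suc n))
    \<and> (\<forall>n\<ge>1. (seqA n)\<^sup>2 \<le> seqA (n - 1) * seqA (Suc n))"
proof -
  have sA: "summable (\<lambda>m. wA m * lamA m ^ n)" for n
    using summable_divide[OF summable_A[of n 0], of "AA 0"] by (simp add: wA_def)
  have w0: "wA m \<ge> 0" for m using vA_nonneg AA0_pos by (simp add: wA_def)
  have l0: "lamA m \<ge> 0" for m by (simp add: lamA_def)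
  have pos: "seqA n > 0" for n
  proof -
    have "0 < wA 0 * lamA 0 ^ n" using AA0_pos by (simp add: wA_def vA_def lamA_def)
    then show ?thesis unfolding seqA_moment using sA[of n] w0 l0
      by (subst suminf_pos_iff) auto
  qed
  have lc: "(seqA (Suc n))\<^sup>2 \<le> seqA n * seqA (Suc (Suc n))" for n
    unfolding seqA_moment by (rule moment_logconvex[OF w0 l0 sA])
  have s0: "seqA 0 = 1" by (simp add: seqA_def odd_dfact_def)
  have s1: "seqA 1 = 1" by (simp add: seqA_def odd_dfact_def)
  have inc: "seqA n \<le> seqA (Suc n)" for n
    by (rule incr_from_logconvex[OF pos]) (use s0 s1 lc in auto)
  have "(seqA n)\<^sup>2 \<le> seqA (n - 1) * seqA (Suc n)" if "n \<ge> 1" for n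
    using that lc[of "n - 1"] by (cases n) auto
  then show ?thesis using pos inc by auto
qed

lemma seqB1: "seqB 1 = 1"
  by (simp add: seqB_def even_dfact_def)

lemma seqB2: "seqB 2 = 1"
proof -
  have S21: "Stirling 2 1 = 1" by (simp add: numeral_2_eq_2)
  have S22: "Stirling 2 2 = 1" by simp
  have e: "{1..2::nat} = {1,2}" by auto
  have "seqB 2 = (\<Sum>k\<in>{1, 2}. (-1) ^ k * real (Stirling 2 k) * real (even_dfact (k - 1)))"
    unfolding seqB_def e by simp
  also have "\<dots> = - real (Stirling 2 1) * real (even_dfact 0) + real (Stirling 2 2) * real (even_dfact 1)"
    by simp
  also have "\<dots> = 1" unfolding S21 S22 by (simp add: even_dfact_def)
  finally show ?thesis .
qed

lemma seqB_facts:
  "(\<forall>n\<ge>1. seqB n > 0) \<and> (\<forall>n\<ge>1. seqB n \<le> seqB (Suc n))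
    \<and> (\<forall>n\<ge>2. (seqB n)\<^sup>2 \<le> seqB (n - 1) * seqB (Suc n))"
proof -
  have sB: "summable (\<lambda>m. uB m * real m ^ n)" for n
    using summable_B[of n 0 0] by simp
  have w0: "uB m \<ge> 0" for m by (simp add: uB_def)
  have l0: "real m \<ge> 0" for m by simp
  have pos: "tB n > 0" for n
  proof -
    have "0 < uB 1 * real 1 ^ n" by (simp add: uB_def)
    then have ex: "\<exists>i. 0 < uB i * real i ^ n" by blast
    have nn: "\<And>m. 0 \<le> uB m * real m ^ n" using w0 by simp
    show ?thesis unfolding tB_def using suminf_pos_iff[OF sB[of n] nn] ex by blast
  qed
  have lc: "(tB (Suc n))\<^sup>2 \<le> tB n * tB (Suc (Suc n))" for n
    unfolding tB_def by (rule moment_logconvex[OF w0 l0 sB])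
  have s0: "tB 0 = 1" using seqB_moment[of 0] seqB1 by (simp only: One_nat_def)
  have s1: "tB 1 = 1" using seqB_moment[of 1] seqB2 by (simp only: Suc_1)
  have inc: "tB n \<le> tB (Suc n)" for n
  proof (rule incr_from_logconvex[where s=tB])
    show "\<And>n. 0 < tB n" by (rule pos)
    show "tB 0 \<le> tB 1" using s0 s1 by simp
    show "\<And>n. (tB (Suc n))\<^sup>2 \<le> tB n * tB (Suc (Suc n))" by (rule lc)
  qed
  have a: "seqB n > 0" if "n \<ge> 1" for n
  proof -
    define j where "j = n - 1"
    have j: "n = Suc j" using that unfolding j_def by arith
    show ?thesis unfolding j seqB_moment by (rule pos)
  qed
  have b: "seqB n \<le> seqB (Suc n)" if "n \<ge> 1" for n
  proof -
    define j where "j = n - 1"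
    have j: "n = Suc j" using that unfolding j_def by arith
    show ?thesis unfolding j seqB_moment by (rule inc)
  qed
  have c: "(seqB n)\<^sup>2 \<le> seqB (n - 1) * seqB (Suc n)" if "n \<ge> 2" for n
  proof -
    define j where "j = n - 2"
    have j: "n = Suc (Suc j)" using that unfolding j_def by arith
    have e: "n - 1 = Suc j" unfolding j by simp
    show ?thesis unfolding e unfolding j seqB_moment by (rule lc)
  qed
  show ?thesis using a b c by auto
qed

fun FF :: "(real \<times> real \<times> real) list \<Rightarrow> real \<Rightarrow> real" where
  "FF [] x = 0"
| "FF ((c, a, b) # L) x = c * exp (a * x) * (2 - exp x) powr b + FF L x"

fun DL :: "(real \<times> real \<times> real) list \<Rightarrow> (real \<times> real \<times> real) list" where
  "DL [] = []"
| "DL ((c, a, b) # L) = (c * a, a, b) # (- (c * b), a + 1, b - 1) # DL L"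

lemma exp_lt2: fixes x :: real assumes "x < ln 2" shows "exp x < 2"
proof -
  have "exp x < exp (ln 2)" using assms by (simp only: exp_less_cancel_iff)
  then show ?thesis by simp
qed

lemma term_deriv:
  fixes x :: real
  assumes "x < ln 2"
  shows "((\<lambda>x. c * exp (a * x) * (2 - exp x) powr b) has_real_derivative
     c * a * exp (a * x) * (2 - exp x) powr b + (- (c * b)) * exp ((a + 1) * x) * (2 - exp x) powr (b - 1)) (at x)"
proof -
  have t: "2 - exp x > 0" using exp_lt2[OF assms] by simp
  have e: "exp ((a + 1) * x) = exp (a * x) * exp x" by (simp add: distrib_right exp_add)
  show ?thesis unfolding e
    using t by (auto intro!: derivative_eq_intros simp: algebra_simps)
qed

lemma FF_deriv:
  assumes "x < ln 2"
  shows "(FF L has_real_derivative FF (DL L) x) (at x)"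
proof (induction L)
  case Nil
  have "FF [] = (\<lambda>x. 0)" by (rule ext) simp
  then show ?case by simp
next
  case (Cons p L)
  obtain c a b where p: "p = (c, a, b)" by (cases p) auto
  have e: "FF (p # L) = (\<lambda>x. c * exp (a * x) * (2 - exp x) powr b + FF L x)"
    by (rule ext) (simp add: p)
  show ?case unfolding e using DERIV_add[OF term_deriv[OF assms, of c a b] Cons.IH]
    by (simp add: p algebra_simps)
qed

lemma FF_iter:
  assumes agree: "\<forall>y<ln 2. f y = FF L y"
  shows "\<forall>y<ln 2. (deriv ^^ n) f y = FF ((DL ^^ n) L) y"
proof (induction n)
  case 0 then show ?case using agree by simp
next
  case (Suc n)
  show ?case
  proof (intro allI impI)
    fix y :: real assume y: "y < ln 2"
    have "((deriv ^^ n) f has_real_derivative FF (DL ((DL ^^ n) L)) y) (at y)"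
      by (rule has_field_derivative_transform_within_open[OF FF_deriv[OF y], of "{..<ln 2}"])
         (simp_all add: y Suc.IH)
    then have "deriv ((deriv ^^ n) f) y = FF (DL ((DL ^^ n) L)) y"
      by (rule DERIV_imp_deriv)
    then show "(deriv ^^ Suc n) f y = FF ((DL ^^ Suc n) L) y"
      by (simp only: funpow.simps comp_def)
  qed
qed

lemma FF_iter_differentiable:
  assumes agree: "\<forall>y<ln 2. f y = FF L y" and y: "y < ln 2"
  shows "(deriv ^^ n) f differentiable (at y)"
proof -
  have "((deriv ^^ n) f has_real_derivative FF (DL ((DL ^^ n) L)) y) (at y)"
    by (rule has_field_derivative_transform_within_open[OF FF_deriv[OF y], of "{..<ln 2}"])
       (simp_all add: y FF_iter[OF agree, of n])
  then show ?thesis by (rule differentiableI[OF has_field_derivative_imp_has_derivative])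
qed

definition good :: "(real \<times> real \<times> real) list \<Rightarrow> bool" where
  "good L \<longleftrightarrow> (\<forall>p\<in>set L. fst p \<ge> 0 \<and> fst (snd p) \<ge> 0 \<and> snd (snd p) \<le> 0)"

lemma good_Cons: "good ((c, a, b) # L) \<longleftrightarrow> (c \<ge> 0 \<and> a \<ge> 0 \<and> b \<le> 0) \<and> good L"
  by (simp add: good_def)

lemma good_DL: "good L \<Longrightarrow> good (DL L)"
proof (induction L rule: DL.induct)
  case 1 then show ?case by (simp add: good_def)
next
  case (2 c a b L)
  then have h: "c \<ge> 0" "a \<ge> 0" "b \<le> 0" "good L" by (simp_all only: good_Cons)
  have "c * a \<ge> 0" using h by simp
  moreover have "- (c * b) \<ge> 0" using h by (simp add: mult_nonneg_nonpos)
  ultimately show ?case using h 2 by (simp only: DL.simps good_Cons) simp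
qed

lemma good_iter: "good L \<Longrightarrow> good ((DL ^^ n) L)"
  by (induction n) (auto simp: good_DL)

lemma FF_nonneg: "good L \<Longrightarrow> FF L x \<ge> 0"
proof (induction L rule: DL.induct)
  case 1 then show ?case by simp
next
  case (2 c a b L)
  then have h: "c \<ge> 0" "good L" by (simp_all only: good_Cons)
  have "c * exp (a * x) * (2 - exp x) powr b \<ge> 0" using h by simp
  then show ?case using h 2 by simp
qed

lemma G_eq:
  assumes x: "x < ln 2"
  shows "G x = FF [(1/4, 1/2, -1/2)] x"
proof -
  have t: "2 - exp x > 0" using exp_lt2[OF x] by simp
  have h: "exp (-x) = exp (-x/2) * exp (-x/2)"
    by (simp only: exp_add[symmetric]) simp
  have hs: "sqrt (exp (-x)) = exp (-x/2)"
  proof -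
    have "sqrt (exp (-x)) = sqrt (exp (-x/2) * exp (-x/2))" by (rule arg_cong[where f=sqrt, OF h])
    also have "\<dots> = \<bar>exp (-x/2)\<bar>" by (rule real_sqrt_abs2)
    finally show ?thesis by simp
  qed
  have "2 * exp (- x) - 1 = exp (-x) * (2 - exp x)"
    by (simp add: exp_minus field_simps)
  then have sq: "sqrt (2 * exp (- x) - 1) = exp (-x/2) * sqrt (2 - exp x)"
    by (simp only: real_sqrt_mult hs)
  have p: "(2 - exp x) powr (-1/2) = inverse (sqrt (2 - exp x))"
  proof -
    have "(2 - exp x) powr (-(1/2)) = inverse ((2 - exp x) powr (1/2))" by (rule powr_minus)
    also have "(2 - exp x) powr (1/2) = sqrt (2 - exp x)" using t by (intro powr_half_sqrt) simp
    finally show ?thesis by simp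
  qed
  have e: "exp (1/2 * x) = inverse (exp (-x/2))"
    by (simp add: exp_minus)
  have f: "FF [(1/4, 1/2, -1/2)] x = 1/4 * exp (1/2 * x) * (2 - exp x) powr (-1/2)"
    by simp
  have "G x = 1 / (4 * (exp (-x/2) * sqrt (2 - exp x)))" unfolding G_def sq ..
  also have "\<dots> = 1/4 * inverse (exp (-x/2)) * inverse (sqrt (2 - exp x))"
    by (simp add: inverse_eq_divide)
  also have "\<dots> = FF [(1/4, 1/2, -1/2)] x" unfolding f e p ..
  finally show ?thesis .
qed

lemma G_pos: "x < ln 2 \<Longrightarrow> G x > 0"
  using exp_lt2[of x] by (simp add: G_eq)

lemma lnG_eq:
  assumes y: "y < ln 2"
  shows "ln (G y) = ln (1/4) + y / 2 + (-1/2) * ln (2 - exp y)"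
proof -
  have t: "2 - exp y > 0" using exp_lt2[OF y] by simp
  have "ln (G y) = ln ((1/4 * exp (1/2 * y)) * (2 - exp y) powr (-1/2))"
    unfolding G_eq[OF y] by simp
  also have "\<dots> = ln (1/4 * exp (1/2 * y)) + ln ((2 - exp y) powr (-1/2))"
    using t by (intro ln_mult_pos) auto
  also have "ln (1/4 * exp (1/2 * y)) = ln (1/4) + 1/2 * y"
    by (subst ln_mult_pos) auto
  finally show ?thesis using t by simp
qed

lemma lnG_deriv:
  assumes x: "x < ln 2"
  shows "deriv (\<lambda>y. ln (G y)) x = FF [(1, 0, -1)] x"
proof -
  have t: "2 - exp x > 0" using exp_lt2[OF x] by simp
  have "((\<lambda>y. ln (1/4) + y / 2 + (-1/2) * ln (2 - exp y)) has_real_derivative FF [(1, 0, -1)] x) (at x)"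
    using t by (auto intro!: derivative_eq_intros simp: powr_neg_one field_simps)
  then have "((\<lambda>y. ln (G y)) has_real_derivative FF [(1, 0, -1)] x) (at x)"
    by (rule has_field_derivative_transform_within_open[of _ _ _ "{..<ln 2}"]) (use x lnG_eq in auto)
  then show ?thesis by (rule DERIV_imp_deriv)
qed

lemma part1: "log_abs_monotonic_on G {..<ln 2}"
  unfolding log_abs_monotonic_on_def
proof (intro conjI ballI allI impI)
  fix x assume "x \<in> {..<ln (2::real)}"
  then show "G x > 0" using G_pos by simp
next
  fix n x assume "x \<in> {..<ln (2::real)}"
  then show "(deriv ^^ n) G differentiable (at x)"
    using FF_iter_differentiable[of G "[(1/4, 1/2, -1/2)]" x n] G_eq by simp
next
  fix n :: nat and x :: real assume n: "n \<ge> 1" and x: "x \<in> {..<ln 2}"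
  obtain m where m: "n = Suc m" using n by (cases n) auto
  have "(deriv ^^ n) (\<lambda>y. ln (G y)) x = (deriv ^^ m) (deriv (\<lambda>y. ln (G y))) x"
    unfolding m funpow_Suc_right by simp
  also have "\<dots> = FF ((DL ^^ m) [(1, 0, -1)]) x"
    using FF_iter[of "deriv (\<lambda>y. ln (G y))" "[(1, 0, -1)]" m] lnG_deriv x by simp
  also have "\<dots> \<ge> 0"
    by (intro FF_nonneg good_iter) (simp add: good_def)
  finally show "(deriv ^^ n) (\<lambda>y. ln (G y)) x \<ge> 0" .
qed

theorem theorem6p2:
  shows "log_abs_monotonic_on G {..<ln 2}
    \<and> (\<forall>n. seqA n > 0)
    \<and> (\<forall>n. seqA n \<le> seqA (Suc n))
    \<and> (\<forall>n\<ge>1. (seqA n)\<^sup>2 \<le> seqA (n - 1) * seqA (Suc n))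
    \<and> (\<forall>n\<ge>1. seqB n > 0)
    \<and> (\<forall>n\<ge>1. seqB n \<le> seqB (Suc n))
    \<and> (\<forall>n\<ge>2. (seqB n)\<^sup>2 \<le> seqB (n - 1) * seqB (Suc n))"
  using part1 seqA_facts seqB_facts by blast

end
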